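(* Let $\mathcal{H}$ be a finite-dimensional Hilbert space with orthonormal basis $\{|g_i\rangle\}_{i=1}^{N_g}\cup\{|e_j\rangle\}_{j=1}^{N_e}$ (ground and excited states). Let $$H=\sum_{i=1}^{N_g}\sum_{j=1}^{N_e}\Big[\Delta_{ij}\big(|g_i\rangle\langle g_i|-|e_j\rangle\langle e_j|\big)+\big(V_{ij}|g_i\rangle\langle e_j|+V_{ij}^*|e_j\rangle\langle g_i|\big)\Big]$$ with $\Delta_{ij}\in\mathbb{R}$, $V_{ij}\in\mathbb{C}$. Let $\gamma_{ij}\ge 0$ be decay rates with $\Gamma_j:=\sum_{i=1}^{N_g}\gamma_{ij}>0$ for every $j$, let $\sigma_{ij}=|g_i\rangle\langle e_j|$, and define the Lindblad operator $$L(\rho)=-i[H,\rho]+\sum_{i,j}\gamma_{ij}\Big(-\tfrac12\{\sigma_{ij}^\dagger\sigma_{ij},\rho\}+\sigma_{ij}\rho\sigma_{ij}^\dagger\Big).$$ Let $\Gamma=\sum_{i,j}\gamma_{ij}\sigma_{ij}^\dagger\sigma_{ij}$, $\tilde H=H-i\Gamma$, and $L_{\tilde H}\rho=-i(\tilde H\rho-\rho\tilde H^\dagger)$. Then a density matrix $\rho_d$ on $\mathcal{H}$ is a dark state of $L$ if and only if $L_{\tilde H}\rho_d=0$.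
   Context: A density matrix is a positive semidefinite Hermitian operator of trace one. A dark state of $L$ is a density matrix $\rho$ with $L\rho=0$ that involves only the ground-state manifold, i.e. $P\rho P=\rho$ where $P=\sum_{i=1}^{N_g}|g_i\rangle\langle g_i|$ (equivalently, $\rho$ has no population or coherence involving the excited states $|e_j\rangle$). $\{A,B\}=AB+BA$ denotes the anticommutator. *)

theory Defs
  imports "HOL-Analysis.Analysis"
begin

text \<open>Operators on the Hilbert space spanned by the orthonormal basis
  ground states (Inl i, i :: 'g) and excited states (Inr j, j :: 'e).
  Operators are complex square matrices indexed by the sum type.\<close>

type_synonym ('g,'e) op = "complex ^ ('g + 'e) ^ ('g + 'e)"

definition ketbra :: "'n \<Rightarrow> 'n \<Rightarrow> complex ^ 'n ^ 'n" where
  "ketbra a b = (\<chi> r c. if r = a \<and> c = b then 1 else 0)"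

definition smat :: "complex \<Rightarrow> complex ^ 'n ^ 'n \<Rightarrow> complex ^ 'n ^ 'n" where
  "smat z A = (\<chi> r c. z * A $ r $ c)"

definition adj :: "complex ^ 'n ^ 'n \<Rightarrow> complex ^ 'n ^ 'n" where
  "adj A = (\<chi> r c. cnj (A $ c $ r))"

definition trace :: "complex ^ 'n ^ 'n \<Rightarrow> complex" where
  "trace A = (\<Sum>i\<in>UNIV. A $ i $ i)"

definition comm :: "complex ^ 'n ^ 'n \<Rightarrow> complex ^ 'n ^ 'n \<Rightarrow> complex ^ 'n ^ 'n" where
  "comm A B = A ** B - B ** A"

definition anticomm :: "complex ^ 'n ^ 'n \<Rightarrow> complex ^ 'n ^ 'n \<Rightarrow> complex ^ 'n ^ 'n" where
  "anticomm A B = A ** B + B ** A"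

definition hermitian :: "complex ^ 'n ^ 'n \<Rightarrow> bool" where
  "hermitian A \<longleftrightarrow> adj A = A"

definition psd :: "complex ^ 'n ^ 'n \<Rightarrow> bool" where
  "psd A \<longleftrightarrow> hermitian A \<and>
     (\<forall>v :: complex ^ 'n. let q = (\<Sum>i\<in>UNIV. cnj (v $ i) * (A *v v) $ i) in
        q \<in> \<real> \<and> 0 \<le> Re q)"

definition density :: "complex ^ 'n ^ 'n \<Rightarrow> bool" where
  "density \<rho> \<longleftrightarrow> psd \<rho> \<and> trace \<rho> = 1"

definition hamiltonian :: "('g::finite \<Rightarrow> 'e::finite \<Rightarrow> real) \<Rightarrow> ('g \<Rightarrow> 'e \<Rightarrow> complex)
    \<Rightarrow> ('g,'e) op" where
  "hamiltonian \<Delta> V = (\<Sum>i\<in>UNIV. \<Sum>j\<in>UNIV.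
      smat (complex_of_real (\<Delta> i j)) (ketbra (Inl i) (Inl i) - ketbra (Inr j) (Inr j))
      + (smat (V i j) (ketbra (Inl i) (Inr j)) + smat (cnj (V i j)) (ketbra (Inr j) (Inl i))))"

definition sigma :: "'g::finite \<Rightarrow> 'e::finite \<Rightarrow> ('g,'e) op" where
  "sigma i j = ketbra (Inl i) (Inr j)"

definition lindblad :: "('g::finite \<Rightarrow> 'e::finite \<Rightarrow> real) \<Rightarrow> ('g \<Rightarrow> 'e \<Rightarrow> complex)
    \<Rightarrow> ('g \<Rightarrow> 'e \<Rightarrow> real) \<Rightarrow> ('g,'e) op \<Rightarrow> ('g,'e) op" where
  "lindblad \<Delta> V \<gamma> \<rho> = smat (- \<i>) (comm (hamiltonian \<Delta> V) \<rho>)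
     + (\<Sum>i\<in>UNIV. \<Sum>j\<in>UNIV. smat (complex_of_real (\<gamma> i j))
          (smat (- 1/2) (anticomm (adj (sigma i j) ** sigma i j) \<rho>)
           + sigma i j ** \<rho> ** adj (sigma i j)))"

definition decay_op :: "('g::finite \<Rightarrow> 'e::finite \<Rightarrow> real) \<Rightarrow> ('g,'e) op" where
  "decay_op \<gamma> = (\<Sum>i\<in>UNIV. \<Sum>j\<in>UNIV.
      smat (complex_of_real (\<gamma> i j)) (adj (sigma i j) ** sigma i j))"

definition Htilde :: "('g::finite \<Rightarrow> 'e::finite \<Rightarrow> real) \<Rightarrow> ('g \<Rightarrow> 'e \<Rightarrow> complex)
    \<Rightarrow> ('g \<Rightarrow> 'e \<Rightarrow> real) \<Rightarrow> ('g,'e) op" where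
  "Htilde \<Delta> V \<gamma> = hamiltonian \<Delta> V - smat \<i> (decay_op \<gamma>)"

definition L_Htilde :: "('g::finite \<Rightarrow> 'e::finite \<Rightarrow> real) \<Rightarrow> ('g \<Rightarrow> 'e \<Rightarrow> complex)
    \<Rightarrow> ('g \<Rightarrow> 'e \<Rightarrow> real) \<Rightarrow> ('g,'e) op \<Rightarrow> ('g,'e) op" where
  "L_Htilde \<Delta> V \<gamma> \<rho> = smat (- \<i>)
      (Htilde \<Delta> V \<gamma> ** \<rho> - \<rho> ** adj (Htilde \<Delta> V \<gamma>))"

definition ground_proj :: "('g::finite,'e::finite) op" where
  "ground_proj = (\<Sum>i\<in>UNIV. ketbra (Inl i) (Inl i))"

definition dark_state :: "('g::finite \<Rightarrow> 'e::finite \<Rightarrow> real) \<Rightarrow> ('g \<Rightarrow> 'e \<Rightarrow> complex)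
    \<Rightarrow> ('g \<Rightarrow> 'e \<Rightarrow> real) \<Rightarrow> ('g,'e) op \<Rightarrow> bool" where
  "dark_state \<Delta> V \<gamma> \<rho> \<longleftrightarrow> density \<rho> \<and> lindblad \<Delta> V \<gamma> \<rho> = 0
     \<and> ground_proj ** \<rho> ** ground_proj = \<rho>"

end

theory Submission
  imports Defs
begin

lemma ketbra_e[simp]: "ketbra a b $ r $ c = (if r = a \<and> c = b then 1 else 0)"
  by (simp add: ketbra_def)
lemma smat_e[simp]: "smat z A $ r $ c = z * A $ r $ c"
  by (simp add: smat_def)
lemma adj_e[simp]: "adj A $ r $ c = cnj (A $ c $ r)"
  by (simp add: adj_def)
lemma mult_e: "(A ** B) $ r $ c = (\<Sum>k\<in>UNIV. A $ r $ k * B $ k $ c)"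
  by (simp add: matrix_matrix_mult_def)

definition termH :: "('g::finite \<Rightarrow> 'e::finite \<Rightarrow> real) \<Rightarrow> ('g \<Rightarrow> 'e \<Rightarrow> complex) \<Rightarrow> 'g \<Rightarrow> 'e \<Rightarrow> 'g + 'e \<Rightarrow> 'g + 'e \<Rightarrow> complex" where
 "termH \<Delta> V i j r c = complex_of_real (\<Delta> i j) * ((if r = Inl i \<and> c = Inl i then 1 else 0) - (if r = Inr j \<and> c = Inr j then 1 else 0))
   + (V i j * (if r = Inl i \<and> c = Inr j then 1 else 0) + cnj (V i j) * (if r = Inr j \<and> c = Inl i then 1 else 0))"

lemma termH_cnj: "cnj (termH \<Delta> V i j c r) = termH \<Delta> V i j r c"
  unfolding termH_def by (cases r; cases c; auto)

lemma ham_e: "hamiltonian \<Delta> V $ r $ c = (\<Sum>i\<in>UNIV. \<Sum>j\<in>UNIV.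
   complex_of_real (\<Delta> i j) * ((if r = Inl i \<and> c = Inl i then 1 else 0) - (if r = Inr j \<and> c = Inr j then 1 else 0))
   + (V i j * (if r = Inl i \<and> c = Inr j then 1 else 0) + cnj (V i j) * (if r = Inr j \<and> c = Inl i then 1 else 0)))"
  unfolding hamiltonian_def by (simp only: sum_component vector_add_component vector_minus_component smat_e ketbra_e)

lemma ham_e2: "hamiltonian \<Delta> V $ r $ c = (\<Sum>i\<in>UNIV. \<Sum>j\<in>UNIV. termH \<Delta> V i j r c)"
  unfolding ham_e termH_def ..

lemma ham_herm: "adj (hamiltonian \<Delta> V) = hamiltonian \<Delta> V"
  unfolding vec_eq_iff adj_e ham_e2 cnj_sum termH_cnj by simp


definition dgr :: "('g::finite \<Rightarrow> 'e::finite \<Rightarrow> real) \<Rightarrow> 'g + 'e \<Rightarrow> real" where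
  "dgr \<gamma> r = (case r of Inl _ \<Rightarrow> 0 | Inr j \<Rightarrow> (\<Sum>i\<in>UNIV. \<gamma> i j))"

definition dg :: "('g::finite \<Rightarrow> 'e::finite \<Rightarrow> real) \<Rightarrow> 'g + 'e \<Rightarrow> complex" where
  "dg \<gamma> r = complex_of_real (dgr \<gamma> r)"

lemma kb_l: "(ketbra a b ** A) $ r $ c = (if r = a then A$b$c else 0)"
proof -
  have eq: "(\<lambda>k. ketbra a b $ r $ k * A $ k $ c) = (\<lambda>k. if k = b then (if r = a then A$b$c else 0) else 0)"
    by (auto simp: fun_eq_iff)
  show ?thesis unfolding mult_e eq by simp
qed

lemma kb_r: "(A ** ketbra a b) $ r $ c = (if c = b then A$r$a else 0)"
proof -
  have eq: "(\<lambda>k. A $ r $ k * ketbra a b $ k $ c) = (\<lambda>k. if k = a then (if c = b then A$r$a else 0) else 0)"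
    by (auto simp: fun_eq_iff)
  show ?thesis unfolding mult_e eq by simp
qed

lemma adj_kb: "adj (ketbra a b) = ketbra b a"
  by (auto simp: vec_eq_iff)

lemma sig_sig: "adj (sigma i j) ** sigma i j = ketbra (Inr j) (Inr j)"
  unfolding sigma_def adj_kb by (simp add: vec_eq_iff kb_l)

lemma sumdelta: fixes f :: "'e::finite \<Rightarrow> complex" and r c :: "'g + 'e" shows "(\<Sum>j\<in>UNIV. f j * (if r = Inr j \<and> c = Inr j then (1::complex) else 0))
   = (if r = c then (case r of Inl _ \<Rightarrow> 0 | Inr j \<Rightarrow> f j) else 0)"
proof (cases r)
  case (Inl a) then show ?thesis by auto
next
  case (Inr a)
  have "(\<lambda>j. f j * (if r = Inr j \<and> c = Inr j then (1::complex) else 0))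
      = (\<lambda>j. if j = a then (if c = r then f a else 0) else 0)" (is "_ = ?g") using Inr by (auto simp: fun_eq_iff)
  then have "(\<Sum>j\<in>UNIV. f j * (if r = Inr j \<and> c = Inr j then (1::complex) else 0)) = sum ?g UNIV" by (rule arg_cong)
  then show ?thesis using Inr by (auto split: sum.splits)
qed

lemma decay_e: "decay_op \<gamma> $ r $ c = (if r = c then dg \<gamma> r else 0)"
proof -
  have "decay_op \<gamma> $ r $ c = (\<Sum>i\<in>UNIV. \<Sum>j\<in>UNIV. complex_of_real (\<gamma> i j) * (if r = Inr j \<and> c = Inr j then (1::complex) else 0))"
    unfolding decay_op_def sig_sig by (simp only: sum_component smat_e ketbra_e)
  also have "\<dots> = (\<Sum>i\<in>UNIV. (if r = c then (case r of Inl _ \<Rightarrow> 0 | Inr j \<Rightarrow> complex_of_real (\<gamma> i j)) else 0))"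
    by (simp only: sumdelta)
  also have "\<dots> = (if r = c then dg \<gamma> r else 0)"
    by (cases r) (auto simp: dg_def dgr_def)
  finally show ?thesis .
qed

lemma decay_adj: "adj (decay_op \<gamma>) = decay_op \<gamma>"
  by (auto simp: vec_eq_iff decay_e dg_def)

lemma gp_e: "ground_proj $ r $ c = (if r = c \<and> isl r then (1::complex) else 0)"
proof (cases r)
  case (Inl a)
  have "ground_proj $ r $ c = (\<Sum>i\<in>UNIV. (if r = Inl i \<and> c = Inl i then (1::complex) else 0))"
    unfolding ground_proj_def by (simp only: sum_component ketbra_e)
  also have "(\<lambda>i. (if r = Inl i \<and> c = Inl i then (1::complex) else 0)) = (\<lambda>i. if i = a then (if c = r then 1 else 0) else 0)"
    using Inl by (auto simp: fun_eq_iff)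
  finally show ?thesis using Inl by simp
next
  case (Inr a)
  then show ?thesis unfolding ground_proj_def by simp
qed

lemma gpl: "(ground_proj ** A) $ r $ c = (if isl r then A$r$c else 0)"
proof -
  have eq: "(\<lambda>k. ground_proj $ r $ k * A $ k $ c) = (\<lambda>k. if k = r then (if isl r then A$r$c else 0) else 0)"
    by (auto simp: fun_eq_iff gp_e)
  show ?thesis unfolding mult_e eq by simp
qed

lemma gpr: "(A ** ground_proj) $ r $ c = (if isl c then A$r$c else 0)"
proof -
  have eq: "(\<lambda>k. A $ r $ k * ground_proj $ k $ c) = (\<lambda>k. if k = c then (if isl c then A$r$c else 0) else 0)"
    by (auto simp: fun_eq_iff gp_e)
  show ?thesis unfolding mult_e eq by simp
qed

definition gnd :: "('g::finite,'e::finite) op \<Rightarrow> bool" where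
  "gnd \<rho> \<longleftrightarrow> (\<forall>r c. \<not> (isl r \<and> isl c) \<longrightarrow> \<rho> $ r $ c = 0)"

lemma gnd_iff: fixes \<rho> :: "('g::finite,'e::finite) op" shows "ground_proj ** \<rho> ** ground_proj = \<rho> \<longleftrightarrow> gnd \<rho>"
proof
  assume h: "ground_proj ** \<rho> ** ground_proj = \<rho>"
  show "gnd \<rho>" unfolding gnd_def
  proof (intro allI impI)
    fix r c :: "'g + 'e" assume nc: "\<not> (isl r \<and> isl c)"
    from h have "(ground_proj ** \<rho> ** ground_proj) $ r $ c = \<rho> $ r $ c" by simp
    then show "\<rho> $ r $ c = 0" using nc by (auto simp: gpl gpr split: if_splits)
  qed
next
  assume "gnd \<rho>"
  then show "ground_proj ** \<rho> ** ground_proj = \<rho>"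
    by (auto simp: vec_eq_iff gpl gpr gnd_def)
qed

lemma decay_l: "(decay_op \<gamma> ** A) $ r $ c = dg \<gamma> r * A $ r $ c"
proof -
  have eq: "(\<lambda>k. decay_op \<gamma> $ r $ k * A $ k $ c) = (\<lambda>k. if k = r then dg \<gamma> r * A $ r $ c else 0)"
    by (auto simp: fun_eq_iff decay_e)
  show ?thesis unfolding mult_e eq by simp
qed

lemma decay_r: "(A ** decay_op \<gamma>) $ r $ c = A $ r $ c * dg \<gamma> c"
proof -
  have eq: "(\<lambda>k. A $ r $ k * decay_op \<gamma> $ k $ c) = (\<lambda>k. if k = c then A $ r $ c * dg \<gamma> c else 0)"
    by (auto simp: fun_eq_iff decay_e)
  show ?thesis unfolding mult_e eq by simp
qed

lemma smat_zero[simp]: "smat z 0 = 0"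
  by (simp add: vec_eq_iff)

lemma gnd_decay_l: "gnd \<rho> \<Longrightarrow> decay_op \<gamma> ** \<rho> = 0"
  unfolding vec_eq_iff decay_l
  by (auto simp: gnd_def dg_def dgr_def split: sum.splits)

lemma gnd_decay_r: "gnd \<rho> \<Longrightarrow> \<rho> ** decay_op \<gamma> = 0"
  unfolding vec_eq_iff decay_r
  by (auto simp: gnd_def dg_def dgr_def split: sum.splits)

lemma gnd_kb_l: "gnd \<rho> \<Longrightarrow> ketbra a (Inr j) ** \<rho> = 0"
  unfolding vec_eq_iff kb_l by (auto simp: gnd_def)

lemma gnd_kb_r: "gnd \<rho> \<Longrightarrow> \<rho> ** ketbra (Inr j) b = 0"
  unfolding vec_eq_iff kb_r by (auto simp: gnd_def)

lemma lindblad_gnd: "gnd \<rho> \<Longrightarrow> lindblad \<Delta> V \<gamma> \<rho> = smat (- \<i>) (comm (hamiltonian \<Delta> V) \<rho>)"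
  unfolding lindblad_def sig_sig anticomm_def
  by (simp add: gnd_kb_l gnd_kb_r sigma_def)

lemma H_cnj: "cnj (hamiltonian \<Delta> V $ c $ r) = hamiltonian \<Delta> V $ r $ c"
  by (metis adj_e ham_herm)

lemma D_cnj: "cnj (decay_op \<gamma> $ c $ r) = decay_op \<gamma> $ r $ c"
  by (metis adj_e decay_adj)

lemma LH_expand: "L_Htilde \<Delta> V \<gamma> \<rho> = smat (- \<i>) (hamiltonian \<Delta> V ** \<rho> - \<rho> ** hamiltonian \<Delta> V)
    - (decay_op \<gamma> ** \<rho> + \<rho> ** decay_op \<gamma>)"
proof -
  have "\<And>r c. L_Htilde \<Delta> V \<gamma> \<rho> $ r $ c = (smat (- \<i>) (hamiltonian \<Delta> V ** \<rho> - \<rho> ** hamiltonian \<Delta> V)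
    - (decay_op \<gamma> ** \<rho> + \<rho> ** decay_op \<gamma>)) $ r $ c"
    unfolding L_Htilde_def Htilde_def mult_e smat_e vector_minus_component vector_add_component adj_e
      complex_cnj_diff complex_cnj_mult H_cnj D_cnj
    by (simp add: algebra_simps sum_subtractf sum.distrib sum_distrib_left)
  then show ?thesis by (simp add: vec_eq_iff)
qed

lemma LH_gnd: "gnd \<rho> \<Longrightarrow> L_Htilde \<Delta> V \<gamma> \<rho> = smat (- \<i>) (comm (hamiltonian \<Delta> V) \<rho>)"
  unfolding LH_expand comm_def by (simp add: gnd_decay_l gnd_decay_r)

lemma trace_LH: "trace (L_Htilde \<Delta> V \<gamma> \<rho>) = - 2 * (\<Sum>r\<in>UNIV. dg \<gamma> r * \<rho> $ r $ r)"
proof -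
  have sw: "(\<Sum>r\<in>UNIV. (hamiltonian \<Delta> V ** \<rho>) $ r $ r) = (\<Sum>r\<in>UNIV. (\<rho> ** hamiltonian \<Delta> V) $ r $ r)"
    unfolding mult_e by (subst sum.swap) (simp add: mult.commute)
  have "trace (L_Htilde \<Delta> V \<gamma> \<rho>) = (\<Sum>r\<in>UNIV. - \<i> * ((hamiltonian \<Delta> V ** \<rho>) $ r $ r - (\<rho> ** hamiltonian \<Delta> V) $ r $ r)
      - 2 * (dg \<gamma> r * \<rho> $ r $ r))"
    unfolding trace_def LH_expand by (simp add: decay_l decay_r mult.commute)
  also have "\<dots> = - \<i> * ((\<Sum>r\<in>UNIV. (hamiltonian \<Delta> V ** \<rho>) $ r $ r) - (\<Sum>r\<in>UNIV. (\<rho> ** hamiltonian \<Delta> V) $ r $ r))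
      - 2 * (\<Sum>r\<in>UNIV. dg \<gamma> r * \<rho> $ r $ r)"
    by (simp add: sum_subtractf sum_negf sum_distrib_left right_diff_distrib)
  finally show ?thesis using sw by simp
qed

lemma psd_diag:
  fixes A :: "complex ^ 'n ^ 'n"
  assumes "psd A"
  shows "A $ r $ r \<in> \<real> \<and> 0 \<le> Re (A $ r $ r)"
proof -
  define v :: "complex ^ 'n" where "v = (\<chi> i. if i = r then 1 else 0)"
  have Av: "(A *v v) $ i = A $ i $ r" for i
  proof -
    have eq: "(\<lambda>j. A $ i $ j * v $ j) = (\<lambda>j. if j = r then A $ i $ r else 0)"
      by (auto simp: fun_eq_iff v_def)
    show ?thesis unfolding matrix_vector_mult_def vec_lambda_beta eq by simp
  qed
  have eq2: "(\<lambda>i. cnj (v $ i) * (A *v v) $ i) = (\<lambda>i. if i = r then A $ r $ r else 0)"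
  proof -
    have vi: "v $ i = (if i = r then 1 else 0)" for i by (simp add: v_def)
    show ?thesis by (auto simp: fun_eq_iff vi Av)
  qed
  have "(\<Sum>i\<in>UNIV. cnj (v $ i) * (A *v v) $ i) = A $ r $ r"
    unfolding eq2 by simp
  with assms show ?thesis unfolding psd_def Let_def by metis
qed

lemma psd_zero:
  fixes A :: "complex ^ 'n ^ 'n"
  assumes P: "psd A" and kk: "A $ k $ k = 0"
  shows "A $ k $ l = 0"
proof (rule ccontr)
  define b where "b = A $ k $ l"
  assume "A $ k $ l \<noteq> 0"
  then have b0: "b \<noteq> 0" by (simp add: b_def)
  then have kl: "k \<noteq> l" using kk b_def by auto
  have herm: "A $ l $ k = cnj b"
  proof -
    have "adj A = A" using P by (simp add: psd_def hermitian_def)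
    then have "adj A $ l $ k = A $ l $ k" by simp
    then show ?thesis by (simp add: b_def)
  qed
  have dl: "0 \<le> Re (A $ l $ l)" using psd_diag[OF P] by blast
  define t where "t = (Re (A $ l $ l) + 1) / (cmod b)^2"
  define a where "a = - (complex_of_real t * b)"
  define v :: "complex ^ 'n" where "v = (\<chi> i. (if i = k then a else 0) + (if i = l then 1 else 0))"
  have Av: "(A *v v) $ i = A $ i $ k * a + A $ i $ l" for i
  proof -
    have eq: "(\<lambda>j. A $ i $ j * v $ j) = (\<lambda>j. (if j = k then A $ i $ k * a else 0) + (if j = l then A $ i $ l else 0))"
      using kl by (auto simp: fun_eq_iff v_def)
    show ?thesis unfolding matrix_vector_mult_def vec_lambda_beta eq by (simp add: sum.distrib)
  qed
  have eq2: "(\<lambda>i. cnj (v $ i) * (A *v v) $ i) = (\<lambda>i. (if i = k then cnj a * (A $ k $ k * a + A $ k $ l) else 0)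
       + (if i = l then A $ l $ k * a + A $ l $ l else 0))"
  proof -
    have vi: "v $ i = (if i = k then a else 0) + (if i = l then 1 else 0)" for i by (simp add: v_def)
    show ?thesis using kl by (auto simp: fun_eq_iff vi Av)
  qed
  have q: "(\<Sum>i\<in>UNIV. cnj (v $ i) * (A *v v) $ i) = cnj a * b + cnj b * a + A $ l $ l"
    unfolding eq2 by (simp add: sum.distrib kk herm b_def[symmetric])
  have nb: "b * cnj b = complex_of_real ((cmod b)^2)" by (rule complex_norm_square[symmetric])
  have e1: "cnj a * b = - complex_of_real (t * (cmod b)^2)"
  proof -
    have "cnj a * b = - (complex_of_real t * (b * cnj b))" by (simp add: a_def mult_ac)
    also have "\<dots> = - complex_of_real (t * (cmod b)^2)" by (simp only: nb of_real_mult)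
    finally show ?thesis .
  qed
  have e2: "cnj b * a = - complex_of_real (t * (cmod b)^2)"
  proof -
    have "cnj b * a = - (complex_of_real t * (b * cnj b))" by (simp add: a_def mult_ac)
    also have "\<dots> = - complex_of_real (t * (cmod b)^2)" by (simp only: nb of_real_mult)
    finally show ?thesis .
  qed
  have tb: "t * (cmod b)^2 = Re (A $ l $ l) + 1"
    using b0 by (simp add: t_def)
  have "Re (cnj a * b + cnj b * a + A $ l $ l) = - Re (A $ l $ l) - 2"
    unfolding e1 e2 tb by simp
  moreover have "0 \<le> Re (\<Sum>i\<in>UNIV. cnj (v $ i) * (A *v v) $ i)"
    using P unfolding psd_def Let_def by blast
  ultimately show False using q dl by simp
qed

theorem theorem1:
  fixes \<Delta> :: "'g::finite \<Rightarrow> 'e::finite \<Rightarrow> real"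
    and V :: "'g \<Rightarrow> 'e \<Rightarrow> complex"
    and \<gamma> :: "'g \<Rightarrow> 'e \<Rightarrow> real"
    and \<rho> :: "('g,'e) op"
  assumes "\<And>i j. \<gamma> i j \<ge> 0"
    and "\<And>j. (\<Sum>i\<in>UNIV. \<gamma> i j) > 0"
    and "density \<rho>"
  shows "dark_state \<Delta> V \<gamma> \<rho> \<longleftrightarrow> L_Htilde \<Delta> V \<gamma> \<rho> = 0"
proof
  assume D: "dark_state \<Delta> V \<gamma> \<rho>"
  then have g: "gnd \<rho>" using gnd_iff unfolding dark_state_def by blast
  from D have "lindblad \<Delta> V \<gamma> \<rho> = 0" unfolding dark_state_def by blast
  then show "L_Htilde \<Delta> V \<gamma> \<rho> = 0" using lindblad_gnd[OF g] LH_gnd[OF g] by simp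
next
  assume L: "L_Htilde \<Delta> V \<gamma> \<rho> = 0"
  have P: "psd \<rho>" using assms(3) by (simp add: density_def)
  have S: "(\<Sum>r\<in>UNIV. dg \<gamma> r * \<rho> $ r $ r) = 0"
    using trace_LH[of \<Delta> V \<gamma> \<rho>] L by (simp add: trace_def)
  define f where "f r = dgr \<gamma> r * Re (\<rho> $ r $ r)" for r
  have fe: "dg \<gamma> r * \<rho> $ r $ r = complex_of_real (f r)" for r
  proof -
    have "\<rho> $ r $ r \<in> \<real>" using psd_diag[OF P] by blast
    then have "\<rho> $ r $ r = complex_of_real (Re (\<rho> $ r $ r))" by simp
    then show ?thesis unfolding f_def dg_def by (metis of_real_mult)
  qed
  have fnn: "0 \<le> f r" for r
  proof -
    have "0 \<le> dgr \<gamma> r" unfolding dgr_def using assms(1) by (auto simp: sum_nonneg split: sum.splits)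
    moreover have "0 \<le> Re (\<rho> $ r $ r)" using psd_diag[OF P] by blast
    ultimately show ?thesis unfolding f_def by simp
  qed
  have "complex_of_real (\<Sum>r\<in>UNIV. f r) = 0" using S fe by (simp add: of_real_sum)
  then have "(\<Sum>r\<in>UNIV. f r) = 0" by (simp only: of_real_eq_0_iff)
  then have f0: "\<forall>r\<in>UNIV. f r = 0" using sum_nonneg_eq_0_iff[of UNIV f] fnn by simp
  have dz: "\<rho> $ Inr j $ Inr j = 0" for j
  proof -
    have "(\<Sum>i\<in>UNIV. \<gamma> i j) * Re (\<rho> $ Inr j $ Inr j) = 0" using f0[rule_format, of "Inr j"] unfolding f_def dgr_def by simp
    then have "Re (\<rho> $ Inr j $ Inr j) = 0" using assms(2)[of j] by simp
    moreover have "\<rho> $ Inr j $ Inr j \<in> \<real>" using psd_diag[OF P] by blast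
    ultimately show ?thesis by (metis of_real_0 of_real_Re)
  qed
  have herm: "\<rho> $ r $ c = cnj (\<rho> $ c $ r)" for r c
  proof -
    have "adj \<rho> = \<rho>" using P by (simp add: psd_def hermitian_def)
    then have "adj \<rho> $ r $ c = \<rho> $ r $ c" by simp
    then show ?thesis by simp
  qed
  have rowz: "\<rho> $ Inr j $ c = 0" for j c using psd_zero[OF P dz] .
  have g: "gnd \<rho>" unfolding gnd_def
  proof (intro allI impI)
    fix r c :: "'g + 'e"
    assume nc: "\<not> (isl r \<and> isl c)"
    show "\<rho> $ r $ c = 0"
    proof (cases "isl r")
      case False
      then obtain j where "r = Inr j" by (cases r) auto
      then show ?thesis using rowz by simp
    next
      case True
      then have "\<not> isl c" using nc by simp
      then obtain j where cj: "c = Inr j" by (cases c) auto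
      have "\<rho> $ r $ c = cnj (\<rho> $ c $ r)" by (rule herm)
      also have "\<dots> = 0" using rowz cj by simp
      finally show ?thesis .
    qed
  qed
  show "dark_state \<Delta> V \<gamma> \<rho>"
    unfolding dark_state_def gnd_iff
    using assms(3) lindblad_gnd[OF g] LH_gnd[OF g] L g by simp
qed

end
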